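(* Let $(\mathcal{V},\mathcal{I})$ be a finite connected graph with vertex set $\mathcal{V}$ and set of unoriented edges $\mathcal{I}$ (each pair of vertices joined by at most one edge), with $N$ edges, each edge $(i,j)\in\mathcal{I}$ having a length $L_{ij}>0$. Let $(S_i)_{i\in\mathcal{V}}$ be given with $\sum_{i\in\mathcal{V}} S_i=0$. Let $0<\gamma<1$ and $f_\gamma(s):=(\gamma+1)|s|^{\frac{2\gamma}{\gamma+1}}$. For fluxes $Q=(Q_{ij})$, with the convention $Q_{ij}=-Q_{ji}$, define $$F[Q]=\sum_{(i,j)\in\mathcal{I},\, i<j} f_\gamma(Q_{ij})\,L_{ij}.$$ Let $Q\in\mathbb{R}^N$ be a global minimizer of $F$ subject to the local mass conservation constraint $$\sum_{j\in N(i)} Q_{ij}=S_i\quad\text{for all } i\in\mathcal{V},$$ where $N(i)$ is the set of neighbours of $i$. Then $Q$ contains no loops, i.e., there exists no closed circle of edges $\{(i_1,i_2),(i_2,i_3),\dots,(i_K,i_1)\}\subset\mathcal{I}$ such that the fluxes $Q_{i_1i_2},Q_{i_2i_3},\dots,Q_{i_Ki_1}$ are all nonzero.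
   Context: Vertices are indexed by integers; the sum over $i<j$ counts each unoriented edge once. $Q_{ij}>0$ means net flow from vertex $i$ to vertex $j$. $F[Q]$ equals $\inf_{C\in\mathbb{R}^N_+}\sum_{i<j}\big(Q_{ij}^2/C_{ij}+\frac{1}{\gamma}C_{ij}^\gamma\big)L_{ij}$ (metabolic coefficient $\nu=1$). *)

theory Defs
  imports Complex_Main
begin

definition simple_graph :: "nat set \<Rightarrow> (nat \<Rightarrow> nat \<Rightarrow> bool) \<Rightarrow> bool" where
  "simple_graph V E \<longleftrightarrow> finite V \<and> (\<forall>i j. E i j \<longrightarrow> i \<in> V \<and> j \<in> V)
     \<and> (\<forall>i j. E i j \<longrightarrow> E j i) \<and> (\<forall>i. \<not> E i i)"

definition graph_connected :: "nat set \<Rightarrow> (nat \<Rightarrow> nat \<Rightarrow> bool) \<Rightarrow> bool" where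
  "graph_connected V E \<longleftrightarrow> (\<forall>i\<in>V. \<forall>j\<in>V. E\<^sup>*\<^sup>* i j)"

definition neighbours :: "nat set \<Rightarrow> (nat \<Rightarrow> nat \<Rightarrow> bool) \<Rightarrow> nat \<Rightarrow> nat set" where
  "neighbours V E i = {j \<in> V. E i j}"

definition edges_lt :: "nat set \<Rightarrow> (nat \<Rightarrow> nat \<Rightarrow> bool) \<Rightarrow> (nat \<times> nat) set" where
  "edges_lt V E = {(i, j). i \<in> V \<and> j \<in> V \<and> E i j \<and> i < j}"

definition f_gamma :: "real \<Rightarrow> real \<Rightarrow> real" where
  "f_gamma \<gamma> s = (\<gamma> + 1) * \<bar>s\<bar> powr (2 * \<gamma> / (\<gamma> + 1))"

definition energy_F ::
  "nat set \<Rightarrow> (nat \<Rightarrow> nat \<Rightarrow> bool) \<Rightarrow> (nat \<Rightarrow> nat \<Rightarrow> real) \<Rightarrow> real \<Rightarrow> (nat \<Rightarrow> nat \<Rightarrow> real) \<Rightarrow> real" where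
  "energy_F V E L \<gamma> Q = (\<Sum>(i, j)\<in>edges_lt V E. f_gamma \<gamma> (Q i j) * L i j)"

text \<open>Admissible fluxes: a flux is a vector indexed by the edges (values off edges are zero),
  antisymmetric Q i j = - Q j i, satisfying local mass conservation.\<close>
definition admissible_flux ::
  "nat set \<Rightarrow> (nat \<Rightarrow> nat \<Rightarrow> bool) \<Rightarrow> (nat \<Rightarrow> real) \<Rightarrow> (nat \<Rightarrow> nat \<Rightarrow> real) \<Rightarrow> bool" where
  "admissible_flux V E S Q \<longleftrightarrow>
     (\<forall>i j. \<not> E i j \<longrightarrow> Q i j = 0) \<and>
     (\<forall>i j. Q i j = - Q j i) \<and>
     (\<forall>i\<in>V. (\<Sum>j\<in>neighbours V E i. Q i j) = S i)"

definition has_flux_loop :: "(nat \<Rightarrow> nat \<Rightarrow> bool) \<Rightarrow> (nat \<Rightarrow> nat \<Rightarrow> real) \<Rightarrow> bool" where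
  "has_flux_loop E Q \<longleftrightarrow> (\<exists>cs :: nat list. length cs \<ge> 3 \<and> distinct cs \<and>
     (\<forall>k < length cs. E (cs ! k) (cs ! ((k + 1) mod length cs))
        \<and> Q (cs ! k) (cs ! ((k + 1) mod length cs)) \<noteq> 0))"

end

theory Submission
  imports Defs
begin

lemma key0: fixes x t p :: real assumes "0<p" "p<1" "0<t" "t<x"
  shows "(x+t) powr p + (x-t) powr p < 2 * x powr p"
proof -
  define h where "h s = (x+s) powr p + (x-s) powr p" for s
  have d: "\<And>s. 0 \<le> s \<Longrightarrow> s \<le> t \<Longrightarrow> DERIV h s :> p * (x+s) powr (p-1) - p * (x-s) powr (p-1)"
    using assms unfolding h_def by (auto intro!: derivative_eq_intros)
  obtain z where z: "0 < z" "z < t" "h t - h 0 = (t - 0) * (p * (x+z) powr (p-1) - p * (x-z) powr (p-1))"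
    using MVT2[OF assms(3) d] by auto
  have "(x+z) powr (p-1) < (x-z) powr (p-1)"
    using z assms by (intro powr_less_mono2_neg) auto
  hence "p * (x+z) powr (p-1) - p * (x-z) powr (p-1) < 0" using assms by simp
  hence "t * (p * (x+z) powr (p-1) - p * (x-z) powr (p-1)) < 0" using assms by (intro mult_pos_neg) auto
  hence "h t < h 0" using z by simp
  thus ?thesis unfolding h_def by simp
qed

lemma key1: fixes a t p :: real assumes "0<p" "p<1" "a \<noteq> 0" "0<t" "t<\<bar>a\<bar>"
  shows "\<bar>a+t\<bar> powr p + \<bar>a-t\<bar> powr p < 2 * \<bar>a\<bar> powr p"
proof (cases "a > 0")
  case True
  then show ?thesis using key0[OF assms(1,2,4), of a] assms by simp
next
  case False
  then have "\<bar>a+t\<bar> = \<bar>a\<bar> - t" "\<bar>a-t\<bar> = \<bar>a\<bar> + t" using assms by auto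
  then show ?thesis using key0[OF assms(1,2,4), of "\<bar>a\<bar>"] assms by simp
qed

lemma key2: fixes a t \<gamma> c l :: real assumes "0<\<gamma>" "\<gamma><1" "0<t" "c \<in> {-1,0,1}" "l > 0"
   "c \<noteq> 0 \<Longrightarrow> t < \<bar>a\<bar>"
  shows "f_gamma \<gamma> (a + t*c) * l + f_gamma \<gamma> (a + (-t)*c) * l \<le> 2 * (f_gamma \<gamma> a * l)"
    and "c \<noteq> 0 \<Longrightarrow> f_gamma \<gamma> (a + t*c) * l + f_gamma \<gamma> (a + (-t)*c) * l < 2 * (f_gamma \<gamma> a * l)"
proof -
  define p where "p = 2 * \<gamma> / (\<gamma> + 1)"
  have p: "0 < p" "p < 1" using assms(1,2) by (auto simp: p_def field_simps)
  have s: "\<bar>a + t*c\<bar> powr p + \<bar>a + (-t)*c\<bar> powr p < 2 * \<bar>a\<bar> powr p" if "c \<noteq> 0"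
  proof -
    have "a \<noteq> 0" using assms(3,6) that by auto
    from key1[OF p this assms(3) assms(6)[OF that]]
    show ?thesis using assms(4) that by (auto simp: add.commute)
  qed
  have eq: "f_gamma \<gamma> (a + t*c) * l + f_gamma \<gamma> (a + (-t)*c) * l - 2 * (f_gamma \<gamma> a * l)
     = (\<gamma>+1) * l * (\<bar>a + t*c\<bar> powr p + \<bar>a + (-t)*c\<bar> powr p - 2 * \<bar>a\<bar> powr p)"
    unfolding f_gamma_def p_def by (simp add: algebra_simps)
  have pos: "(\<gamma>+1) * l > 0" using assms by simp
  show "c \<noteq> 0 \<Longrightarrow> f_gamma \<gamma> (a + t*c) * l + f_gamma \<gamma> (a + (-t)*c) * l < 2 * (f_gamma \<gamma> a * l)"
  proof -
    assume c: "c \<noteq> 0"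
    have "(\<gamma>+1) * l * (\<bar>a + t*c\<bar> powr p + \<bar>a + (-t)*c\<bar> powr p - 2 * \<bar>a\<bar> powr p) < 0"
      using s[OF c] pos by (intro mult_pos_neg) auto
    thus ?thesis using eq by linarith
  qed
  show "f_gamma \<gamma> (a + t*c) * l + f_gamma \<gamma> (a + (-t)*c) * l \<le> 2 * (f_gamma \<gamma> a * l)"
  proof (cases "c = 0")
    case True then show ?thesis by simp
  next
    case False
    have "(\<gamma>+1) * l * (\<bar>a + t*c\<bar> powr p + \<bar>a + (-t)*c\<bar> powr p - 2 * \<bar>a\<bar> powr p) < 0"
      using s[OF False] pos by (intro mult_pos_neg) auto
    thus ?thesis using eq by linarith
  qed
qed

theorem lemma2p1:
  fixes V :: "nat set" and E :: "nat \<Rightarrow> nat \<Rightarrow> bool"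
    and L :: "nat \<Rightarrow> nat \<Rightarrow> real" and S :: "nat \<Rightarrow> real"
    and \<gamma> :: real and Q :: "nat \<Rightarrow> nat \<Rightarrow> real"
  assumes graph: "simple_graph V E"
    and conn: "graph_connected V E"
    and Lpos: "\<And>i j. E i j \<Longrightarrow> L i j > 0"
    and Lsym: "\<And>i j. E i j \<Longrightarrow> L i j = L j i"
    and Ssum: "(\<Sum>i\<in>V. S i) = 0"
    and gam: "0 < \<gamma>" "\<gamma> < 1"
    and adm: "admissible_flux V E S Q"
    and minim: "\<And>Q'. admissible_flux V E S Q' \<Longrightarrow> energy_F V E L \<gamma> Q \<le> energy_F V E L \<gamma> Q'"
  shows "\<not> has_flux_loop E Q"
proof
  assume "has_flux_loop E Q"
  then obtain cs where len: "length cs \<ge> 3" and dist: "distinct cs" and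
    loop0: "\<And>k. k < length cs \<Longrightarrow> E (cs ! k) (cs ! ((k + 1) mod length cs))
        \<and> Q (cs ! k) (cs ! ((k + 1) mod length cs)) \<noteq> 0"
    unfolding has_flux_loop_def by blast
  define n where "n = length cs"
  define nx where "nx k = (if k = n - 1 then 0 else Suc k)" for k
  define pv where "pv k = (if k = 0 then n - 1 else k - 1)" for k
  have n3: "n \<ge> 3" using len n_def by simp
  have nxmod: "(k + 1) mod n = nx k" if "k < n" for k using that by (auto simp: nx_def mod_Suc)
  have loop: "E (cs ! k) (cs ! nx k)" "Q (cs ! k) (cs ! nx k) \<noteq> 0" if "k < n" for k
    using loop0[of k] that nxmod[OF that] by (auto simp: n_def)
  have nxl: "nx k < n" if "k < n" for k using that n3 by (auto simp: nx_def)
  have pvl: "pv k < n" if "k < n" for k using that n3 by (auto simp: pv_def)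
  have pvnx: "pv (nx k) = k" if "k < n" for k using that n3 by (auto simp: nx_def pv_def)
  have nxpv: "nx (pv k) = k" if "k < n" for k using that n3 by (auto simp: nx_def pv_def)
  have nxpv_ne: "nx k \<noteq> pv k" if "k < n" for k using that n3 by (auto simp: nx_def pv_def)
  have cseq: "cs ! a = cs ! b \<longleftrightarrow> a = b" if "a < n" "b < n" for a b
    using nth_eq_iff_index_eq[OF dist] that n_def by simp
  define C where "C i j = (if \<exists>k<n. i = cs!k \<and> j = cs!(nx k) then 1
     else if \<exists>k<n. i = cs!k \<and> j = cs!(pv k) then -1 else (0::real))" for i j
  have Ck: "C (cs!k) j = (if j = cs!(nx k) then 1 else if j = cs!(pv k) then -1 else 0)" if "k < n" for k j
    unfolding C_def using that cseq by (smt (verit))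
  have C0: "C i j = 0" if "i \<notin> set cs" for i j
    unfolding C_def using that n_def by (auto simp: in_set_conv_nth)
  have Cvals: "C i j \<in> {-1,0,1}" for i j unfolding C_def by auto
  have Cnz: "\<exists>k<n. (i = cs!k \<and> j = cs!(nx k)) \<or> (j = cs!k \<and> i = cs!(nx k))" if "C i j \<noteq> 0" for i j
  proof -
    from that have "i \<in> set cs" using C0 by blast
    then obtain k where k: "k < n" "i = cs!k" using n_def by (auto simp: in_set_conv_nth)
    then have "j = cs!(nx k) \<or> j = cs!(pv k)" using that Ck by (auto split: if_splits)
    then show ?thesis using k pvl[OF k(1)] nxpv[OF k(1)] by metis
  qed
  have Canti: "C i j = - C j i" for i j
  proof (cases "i \<in> set cs")
    case False
    have "C j i = 0"
    proof (rule ccontr)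
      assume "C j i \<noteq> 0"
      from Cnz[OF this] False nxl show False using n_def by auto
    qed
    then show ?thesis using C0[OF False] by simp
  next
    case True
    then obtain k where k: "k < n" "i = cs!k" using n_def by (auto simp: in_set_conv_nth)
    show ?thesis
    proof (cases "j = cs!(nx k)")
      case True
      have "C j i = -1" using Ck[OF nxl[OF k(1)], of i] True k pvnx[OF k(1)] nxpv_ne[OF nxl[OF k(1)]]
        cseq[of "nx (nx k)" k] nxl[OF nxl[OF k(1)]] by auto
      then show ?thesis using Ck[OF k(1)] k True by simp
    next
      case F1: False
      show ?thesis
      proof (cases "j = cs!(pv k)")
        case True
        have "C j i = 1" using Ck[OF pvl[OF k(1)], of i] True k nxpv[OF k(1)] by auto
        then show ?thesis using Ck[OF k(1)] k True F1 by simp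
      next
        case F2: False
        have "C j i = 0"
        proof (rule ccontr)
          assume "C j i \<noteq> 0"
          from Cnz[OF this] obtain m where m: "m < n" "(j = cs!m \<and> i = cs!(nx m)) \<or> (i = cs!m \<and> j = cs!(nx m))"
            by blast
          from m(2) show False
          proof (elim disjE)
            assume a: "j = cs!m \<and> i = cs!(nx m)"
            then have "cs!(nx m) = cs!k" using k(2) by simp
            then have "nx m = k" using cseq[OF nxl[OF m(1)] k(1)] by blast
            then have "m = pv k" using pvnx[OF m(1)] by simp
            then show False using a F2 by simp
          next
            assume a: "i = cs!m \<and> j = cs!(nx m)"
            then have "cs!m = cs!k" using k(2) by simp
            then have "m = k" using cseq[OF m(1) k(1)] by blast
            then show False using a F1 by simp
          qed
        qed
        then show ?thesis using Ck[OF k(1)] k F1 F2 by simp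
      qed
    qed
  qed
  have CE: "E i j" if "C i j \<noteq> 0" for i j
  proof -
    from Cnz[OF that] obtain k where k: "k < n" "(i = cs!k \<and> j = cs!(nx k)) \<or> (j = cs!k \<and> i = cs!(nx k))" by blast
    have Esym: "\<And>a b. E a b \<Longrightarrow> E b a" using graph unfolding simple_graph_def by blast
    from k(2) show ?thesis
    proof (elim disjE)
      assume "i = cs!k \<and> j = cs!(nx k)" then show ?thesis using loop(1)[OF k(1)] by simp
    next
      assume "j = cs!k \<and> i = cs!(nx k)" then show ?thesis using loop(1)[OF k(1)] Esym by simp
    qed
  qed
  have Ein: "\<And>a b. E a b \<Longrightarrow> a \<in> V \<and> b \<in> V" using graph unfolding simple_graph_def by blast
  have Cvert: "i \<in> V" "j \<in> V" if "C i j \<noteq> 0" for i j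
    using Ein[OF CE[OF that]] by auto
  have finV: "finite V" using graph unfolding simple_graph_def by auto
  have Csum: "(\<Sum>j\<in>neighbours V E i. C i j) = 0" if "i \<in> V" for i
  proof (cases "i \<in> set cs")
    case False then show ?thesis using C0 by simp
  next
    case True
    then obtain k where k: "k < n" "i = cs!k" using n_def by (auto simp: in_set_conv_nth)
    let ?a = "cs!(nx k)" and ?b = "cs!(pv k)"
    have ab: "?a \<noteq> ?b" using cseq[OF nxl[OF k(1)] pvl[OF k(1)]] nxpv_ne[OF k(1)] by simp
    have "C i ?a \<noteq> 0" "C i ?b \<noteq> 0" using Ck[OF k(1)] k ab by auto
    then have inN: "?a \<in> neighbours V E i" "?b \<in> neighbours V E i"
      using CE Cvert unfolding neighbours_def by auto
    have fin: "finite (neighbours V E i)" using finV unfolding neighbours_def by auto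
    have "(\<Sum>j\<in>neighbours V E i. C i j) = (\<Sum>j\<in>neighbours V E i. (if j = ?a then 1 else 0) - (if j = ?b then 1 else 0))"
      using Ck[OF k(1)] k ab by (intro sum.cong) auto
    also have "\<dots> = 0" using fin inN by (simp add: sum_subtractf)
    finally show ?thesis .
  qed
  define Qt where "Qt t i j = Q i j + t * C i j" for t i j
  have admt: "admissible_flux V E S (Qt t)" for t
    unfolding admissible_flux_def
  proof (intro conjI allI impI ballI)
    fix i j assume "\<not> E i j"
    then have "C i j = 0" "Q i j = 0" using adm CE unfolding admissible_flux_def by blast+
    then show "Qt t i j = 0" unfolding Qt_def by simp
  next
    fix i j
    have "Q i j = - Q j i" using adm unfolding admissible_flux_def by blast
    then show "Qt t i j = - Qt t j i" using Canti[of i j] unfolding Qt_def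
      by (simp add: algebra_simps)
  next
    fix i assume i: "i \<in> V"
    have "(\<Sum>j\<in>neighbours V E i. Qt t i j) = (\<Sum>j\<in>neighbours V E i. Q i j) + t * (\<Sum>j\<in>neighbours V E i. C i j)"
      unfolding Qt_def by (simp add: sum.distrib sum_distrib_left)
    moreover have "(\<Sum>j\<in>neighbours V E i. Q i j) = S i" using adm i unfolding admissible_flux_def by blast
    ultimately show "(\<Sum>j\<in>neighbours V E i. Qt t i j) = S i" using Csum[OF i] by simp
  qed
  define T where "T = (\<lambda>k. \<bar>Q (cs!k) (cs!(nx k))\<bar>) ` {..<n}"
  define m where "m = Min T"
  have "0 \<in> {..<n}" using n3 by simp
  then have Tfin: "finite T" "T \<noteq> {}" unfolding T_def by blast+
  have "\<forall>a\<in>T. 0 < a" unfolding T_def using loop(2) by auto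
  then have mpos: "m > 0" unfolding m_def using Min_gr_iff[OF Tfin] by blast
  have mle: "m \<le> \<bar>Q i j\<bar>" if "C i j \<noteq> 0" for i j
  proof -
    from Cnz[OF that] obtain k where k: "k < n" "(i = cs!k \<and> j = cs!(nx k)) \<or> (j = cs!k \<and> i = cs!(nx k))" by blast
    have "\<bar>Q (cs!k) (cs!(nx k))\<bar> \<in> T" unfolding T_def using k(1) by blast
    then have "m \<le> \<bar>Q (cs!k) (cs!(nx k))\<bar>" unfolding m_def using Tfin(1) by (rule Min_le[rotated])
    moreover have "Q i j = - Q j i" using adm unfolding admissible_flux_def by blast
    then have "\<bar>Q i j\<bar> = \<bar>Q j i\<bar>" by simp
    ultimately show ?thesis using k by auto
  qed
  define t where "t = m / 2"
  have tpos: "t > 0" using mpos by (simp add: t_def)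
  have tlt: "t < \<bar>Q i j\<bar>" if "C i j \<noteq> 0" for i j using mpos mle[OF that] by (simp add: t_def)
  have "edges_lt V E \<subseteq> V \<times> V" unfolding edges_lt_def by auto
  then have fin_edges: "finite (edges_lt V E)" using finite_subset finite_cartesian_product[OF finV finV] by blast
  let ?g = "\<lambda>s e. f_gamma \<gamma> (Qt s (fst e) (snd e)) * L (fst e) (snd e)"
  have EF: "energy_F V E L \<gamma> (Qt s) = (\<Sum>e\<in>edges_lt V E. ?g s e)" for s
    unfolding energy_F_def by (simp add: case_prod_beta)
  have EF0: "energy_F V E L \<gamma> Q = (\<Sum>e\<in>edges_lt V E. f_gamma \<gamma> (Q (fst e) (snd e)) * L (fst e) (snd e))"
    unfolding energy_F_def by (simp add: case_prod_beta)
  have le: "?g t e + ?g (-t) e \<le> 2 * (f_gamma \<gamma> (Q (fst e) (snd e)) * L (fst e) (snd e))"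
    if "e \<in> edges_lt V E" for e
  proof -
    have "E (fst e) (snd e)" using that unfolding edges_lt_def by auto
    from key2(1)[OF gam tpos Cvals[of "fst e" "snd e"] Lpos[OF this] tlt]
    show ?thesis unfolding Qt_def .
  qed
  obtain e where e: "e \<in> edges_lt V E" "C (fst e) (snd e) \<noteq> 0"
  proof -
    let ?a = "cs!0" and ?b = "cs!(nx 0)"
    have k0: "0 < n" using n3 by simp
    have ab: "?a \<noteq> ?b" using cseq[OF k0 nxl[OF k0]] nxpv_ne[OF k0] pvnx[OF k0] by auto
    have c1: "C ?a ?b \<noteq> 0" using Ck[OF k0] by simp
    have c2: "C ?b ?a \<noteq> 0" using c1 Canti[of ?b ?a] by simp
    show ?thesis
    proof (cases "?a < ?b")
      case True
      have "E ?a ?b" "?a \<in> V" "?b \<in> V" using CE[OF c1] Cvert[OF c1] by auto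
      then have "(?a,?b) \<in> edges_lt V E" using True by (simp add: edges_lt_def)
      then show ?thesis using that[of "(?a,?b)"] c1 by simp
    next
      case False then have "?b < ?a" using ab by simp
      have "E ?b ?a" "?a \<in> V" "?b \<in> V" using CE[OF c2] Cvert[OF c2] by auto
      then have "(?b,?a) \<in> edges_lt V E" using \<open>?b < ?a\<close> by (simp add: edges_lt_def)
      then show ?thesis using that[of "(?b,?a)"] c2 by simp
    qed
  qed
  have lt: "?g t e + ?g (-t) e < 2 * (f_gamma \<gamma> (Q (fst e) (snd e)) * L (fst e) (snd e))"
  proof -
    have "E (fst e) (snd e)" using e(1) unfolding edges_lt_def by auto
    from key2(2)[OF gam tpos Cvals[of "fst e" "snd e"] Lpos[OF this] tlt e(2)]
    show ?thesis unfolding Qt_def .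
  qed
  have "(\<Sum>e\<in>edges_lt V E. ?g t e + ?g (-t) e) < (\<Sum>e\<in>edges_lt V E. 2 * (f_gamma \<gamma> (Q (fst e) (snd e)) * L (fst e) (snd e)))"
    using fin_edges le lt e(1) by (intro sum_strict_mono_ex1) auto
  then have "energy_F V E L \<gamma> (Qt t) + energy_F V E L \<gamma> (Qt (-t)) < 2 * energy_F V E L \<gamma> Q"
    unfolding EF EF0 by (simp add: sum.distrib sum_distrib_left)
  moreover have "energy_F V E L \<gamma> Q \<le> energy_F V E L \<gamma> (Qt t)" "energy_F V E L \<gamma> Q \<le> energy_F V E L \<gamma> (Qt (-t))"
    using minim[OF admt] by auto
  ultimately show False by linarith
qed

end
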